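(* Let $X\subseteq \mathbb{P}^1\times\mathbb{P}^1\times\mathbb{P}^1$ be a variety of lines such that, for each $h=1,2,3$, $U_h(X)$ resembles a Ferrers diagram. Then $X$ has the $Hyp_4(\star)$-property if and only if for all $a_1,a_2\in[d_1]$, $b_1,b_2\in[d_2]$, $c_1,c_2\in[d_3]$ the following three conditions hold: (1) either $(\mu_{a_1b_1c_1},\mu_{a_2b_1c_1})\neq(1,1)$ or $(\mu_{a_1b_10},\mu_{a_2b_10})\neq(1,0)$; (2) either $(\mu_{a_1b_1c_1},\mu_{a_1b_1c_2})\neq(1,1)$ or $(\mu_{a_10c_1},\mu_{a_10c_2})\neq(1,0)$; (3) either $(\mu_{a_1b_1c_1},\mu_{a_1b_2c_1})\neq(1,1)$ or $(\mu_{0b_1c_1},\mu_{0b_2c_1})\neq(1,0)$.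
   Context: $R=K[x_{1,0},x_{1,1},x_{2,0},x_{2,1},x_{3,0},x_{3,1}]$ ($K$ algebraically closed, characteristic zero) trigraded by $\deg x_{i,j}=\mathbf e_i$, coordinate ring of $\mathbb{P}^1\times\mathbb{P}^1\times\mathbb{P}^1$. A variety of lines is written $X= \bigcup_{(i,j)\in U_3(X)} \mathcal{L}(A_i,B_j)\cup\bigcup_{(i,k)\in U_2(X)} \mathcal{L}(A_i,C_k)\cup \bigcup_{(j,k)\in U_1(X)} \mathcal{L}(B_j,C_k)$, where $\mathcal L(A_1),\ldots,\mathcal L(A_{d_1})$, $\mathcal L(B_1),\ldots,\mathcal L(B_{d_2})$, $\mathcal L(C_1),\ldots,\mathcal L(C_{d_3})$ are the distinct hyperplanes containing some line of $X$, defined by linear forms of degrees $(1,0,0),(0,1,0),(0,0,1)$ respectively, $\mathcal L(F,G)$ is the line defined by $(F,G)$, $U_3(X)\subseteq[d_1]\times[d_2]$, $U_2(X)\subseteq[d_1]\times[d_3]$, $U_1(X)\subseteq[d_2]\times[d_3]$, $[n]=\{1,\dots,n\}$. $U_h(X)$ resembles a Ferrers diagram if after permuting each of its two index sets it becomes a set $U$ with: $(u,v)\in U\Rightarrow (u',v')\in U$ for all $1\le u'\le u$, $1\le v'\le v$. For $P_{ijk}=\mathcal L(A_i)\cap\mathcal L(B_j)\cap\mathcal L(C_k)$, $\mu_{ijk}$ is the number of lines of $X$ through $P_{ijk}$. Moreover $\mu_{ij0}=1$ if $\mathcal L(A_i,B_j)\in X$ and $0$ otherwise; $\mu_{i0k}=1$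 if $\mathcal L(A_i,C_k)\in X$ and $0$ otherwise; $\mu_{0jk}=1$ if $\mathcal L(B_j,C_k)\in X$ and $0$ otherwise. $X$ has the $Hyp_4(\star)$-property if for any $4$ hyperplanes $H_1,\ldots,H_4$ (each defined by a linear form of degree some $\mathbf e_i$) such that $\mathcal{L}(H_i,H_j)$ is a line of $X$ for all $j\neq i-1,i,i+1$ (indices modulo $4$), there is $u$ with $\mathcal{L}(H_u,H_{u+1})$ a line of $X$. *)

theory Defs
  imports Main
begin

text \<open>A hyperplane defined by a linear form of degree e_1, e_2, e_3 is encoded by
  HypA n, HypB n, HypC n respectively.  For 1 <= n <= d_h these are the
  hyperplanes L(A_n), L(B_n), L(C_n) containing lines of X; all other indices
  encode the (infinitely many) remaining hyperplanes of that degree, which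
  contain no line of X.  Distinct codes are distinct hyperplanes.\<close>

datatype hyp = HypA nat | HypB nat | HypC nat

definition variety_of_lines ::
  "nat \<Rightarrow> nat \<Rightarrow> nat \<Rightarrow> (nat \<times> nat) set \<Rightarrow> (nat \<times> nat) set \<Rightarrow> (nat \<times> nat) set \<Rightarrow> bool" where
  "variety_of_lines d1 d2 d3 U1 U2 U3 \<longleftrightarrow>
     U3 \<subseteq> {1..d1} \<times> {1..d2} \<and> U2 \<subseteq> {1..d1} \<times> {1..d3} \<and> U1 \<subseteq> {1..d2} \<times> {1..d3} \<and>
     (\<forall>i\<in>{1..d1}. (\<exists>j. (i,j) \<in> U3) \<or> (\<exists>k. (i,k) \<in> U2)) \<and>
     (\<forall>j\<in>{1..d2}. (\<exists>i. (i,j) \<in> U3) \<or> (\<exists>k. (j,k) \<in> U1)) \<and>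
     (\<forall>k\<in>{1..d3}. (\<exists>i. (i,k) \<in> U2) \<or> (\<exists>j. (j,k) \<in> U1))"

text \<open>The lines of X, each line L(F,G) encoded by the set {F,G} of its two defining hyperplanes.\<close>
definition lines_of :: "(nat \<times> nat) set \<Rightarrow> (nat \<times> nat) set \<Rightarrow> (nat \<times> nat) set \<Rightarrow> hyp set set" where
  "lines_of U1 U2 U3 =
     {{HypA i, HypB j} | i j. (i,j) \<in> U3} \<union>
     {{HypA i, HypC k} | i k. (i,k) \<in> U2} \<union>
     {{HypB j, HypC k} | j k. (j,k) \<in> U1}"

definition is_line_of :: "(nat \<times> nat) set \<Rightarrow> (nat \<times> nat) set \<Rightarrow> (nat \<times> nat) set \<Rightarrow> hyp \<Rightarrow> hyp \<Rightarrow> bool" where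
  "is_line_of U1 U2 U3 H H' \<longleftrightarrow> {H, H'} \<in> lines_of U1 U2 U3"

text \<open>mu i j k: for i,j,k >= 1 the number of lines of X through
  P_ijk = L(A_i) \<inter> L(B_j) \<inter> L(C_k) (a line L(F,G) passes through P_ijk iff
  F and G are among A_i, B_j, C_k); an index 0 gives the indicator of the
  line determined by the two other indices.\<close>
definition mu :: "(nat \<times> nat) set \<Rightarrow> (nat \<times> nat) set \<Rightarrow> (nat \<times> nat) set \<Rightarrow> nat \<Rightarrow> nat \<Rightarrow> nat \<Rightarrow> nat" where
  "mu U1 U2 U3 i j k =
    (if i = 0 then (if (j,k) \<in> U1 then 1 else 0)
     else if j = 0 then (if (i,k) \<in> U2 then 1 else 0)
     else if k = 0 then (if (i,j) \<in> U3 then 1 else 0)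
     else card {l \<in> lines_of U1 U2 U3. l \<subseteq> {HypA i, HypB j, HypC k}})"

definition resembles_ferrers :: "(nat \<times> nat) set \<Rightarrow> nat \<Rightarrow> nat \<Rightarrow> bool" where
  "resembles_ferrers U m n \<longleftrightarrow>
     (\<exists>\<sigma> \<tau>. bij_betw \<sigma> {1..m} {1..m} \<and> bij_betw \<tau> {1..n} {1..n} \<and>
        (let V = (\<lambda>(a,b). (\<sigma> a, \<tau> b)) ` U in
          \<forall>u v. (u,v) \<in> V \<longrightarrow> (\<forall>u' v'. 1 \<le> u' \<and> u' \<le> u \<and> 1 \<le> v' \<and> v' \<le> v \<longrightarrow> (u',v') \<in> V)))"

definition hyp4_star :: "(nat \<times> nat) set \<Rightarrow> (nat \<times> nat) set \<Rightarrow> (nat \<times> nat) set \<Rightarrow> bool" where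
  "hyp4_star U1 U2 U3 \<longleftrightarrow>
     (\<forall>H :: nat \<Rightarrow> hyp.
        (\<forall>i<4. \<forall>j<4. j \<noteq> (i + 3) mod 4 \<and> j \<noteq> i \<and> j \<noteq> (i + 1) mod 4 \<longrightarrow>
            is_line_of U1 U2 U3 (H i) (H j)) \<longrightarrow>
        (\<exists>u<4. is_line_of U1 U2 U3 (H u) (H ((u + 1) mod 4))))"

end

theory Submission
  imports Defs
begin

lemma line_simps[simp]:
  "is_line_of U1 U2 U3 (HypA i) (HypB j) \<longleftrightarrow> (i,j)\<in>U3"
  "is_line_of U1 U2 U3 (HypB j) (HypA i) \<longleftrightarrow> (i,j)\<in>U3"
  "is_line_of U1 U2 U3 (HypA i) (HypC k) \<longleftrightarrow> (i,k)\<in>U2"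
  "is_line_of U1 U2 U3 (HypC k) (HypA i) \<longleftrightarrow> (i,k)\<in>U2"
  "is_line_of U1 U2 U3 (HypB j) (HypC k) \<longleftrightarrow> (j,k)\<in>U1"
  "is_line_of U1 U2 U3 (HypC k) (HypB j) \<longleftrightarrow> (j,k)\<in>U1"
  "\<not> is_line_of U1 U2 U3 (HypA i) (HypA i')"
  "\<not> is_line_of U1 U2 U3 (HypB j) (HypB j')"
  "\<not> is_line_of U1 U2 U3 (HypC k) (HypC k')"
  by (auto simp: is_line_of_def lines_of_def doubleton_eq_iff)

lemma mu_char:
  assumes "a \<noteq> 0" "b \<noteq> 0" "c \<noteq> 0"
  shows "mu U1 U2 U3 a b c = (if (a,b)\<in>U3 then 1 else 0) + (if (a,c)\<in>U2 then 1 else 0) + (if (b,c)\<in>U1 then 1 else 0)"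
proof -
  have "{l \<in> lines_of U1 U2 U3. l \<subseteq> {HypA a, HypB b, HypC c}} =
     (if (a,b)\<in>U3 then {{HypA a, HypB b}} else {}) \<union> (if (a,c)\<in>U2 then {{HypA a, HypC c}} else {})
      \<union> (if (b,c)\<in>U1 then {{HypB b, HypC c}} else {})"
    by (auto simp: lines_of_def doubleton_eq_iff)
  then show ?thesis using assms
    by (auto simp: mu_def doubleton_eq_iff card_insert_if)
qed

lemma ferrers_nested:
  assumes F: "resembles_ferrers U m n" and S: "U \<subseteq> {1..m} \<times> {1..n}"
    and ab: "(a,b) \<in> U" and ab': "(a',b') \<in> U"
  shows "(a,b') \<in> U \<or> (a',b) \<in> U"
proof -
  obtain \<sigma> \<tau> where s: "bij_betw \<sigma> {1..m} {1..m}" and t: "bij_betw \<tau> {1..n} {1..n}"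
    and V: "\<forall>u v. (u,v) \<in> (\<lambda>(a,b). (\<sigma> a, \<tau> b)) ` U \<longrightarrow> (\<forall>u' v'. 1 \<le> u' \<and> u' \<le> u \<and> 1 \<le> v' \<and> v' \<le> v \<longrightarrow> (u',v') \<in> (\<lambda>(a,b). (\<sigma> a, \<tau> b)) ` U)"
    using F unfolding resembles_ferrers_def Let_def by blast
  define I where "I = (\<lambda>(a,b). (\<sigma> a, \<tau> b)) ` U"
  have W: "(u',v') \<in> I" if "(u,v) \<in> I" "1 \<le> u'" "u' \<le> u" "1 \<le> v'" "v' \<le> v" for u v u' v'
    using V that unfolding I_def by blast
  have r: "a \<in> {1..m}" "a' \<in> {1..m}" "b \<in> {1..n}" "b' \<in> {1..n}" using S ab ab' by auto
  have si: "\<sigma> x \<in> {1..m}" if "x \<in> {1..m}" for x using s that bij_betwE by blast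
  have ti: "\<tau> x \<in> {1..n}" if "x \<in> {1..n}" for x using t that bij_betwE by blast
  have injs: "inj_on \<sigma> {1..m}" using s bij_betw_imp_inj_on by blast
  have injt: "inj_on \<tau> {1..n}" using t bij_betw_imp_inj_on by blast
  have bk: "(x,y) \<in> U" if "(\<sigma> x, \<tau> y) \<in> I" "x \<in> {1..m}" "y \<in> {1..n}" for x y
  proof -
    from that(1) obtain p q where pq: "(p,q) \<in> U" "\<sigma> x = \<sigma> p" "\<tau> y = \<tau> q"
      unfolding I_def by auto
    have pq2: "p \<in> {1..m}" "q \<in> {1..n}" using S pq(1) by auto
    have "x = p" using inj_onD[OF injs pq(2) that(2) pq2(1)] .
    moreover have "y = q" using inj_onD[OF injt pq(3) that(3) pq2(2)] .
    ultimately show ?thesis using pq by simp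
  qed
  have i1: "(\<sigma> a, \<tau> b) \<in> I" using ab unfolding I_def by force
  have i2: "(\<sigma> a', \<tau> b') \<in> I" using ab' unfolding I_def by force
  have s1: "1 \<le> \<sigma> a" "1 \<le> \<sigma> a'" using si r by auto
  have t1: "1 \<le> \<tau> b" "1 \<le> \<tau> b'" using ti r by auto
  show ?thesis
  proof (cases "\<sigma> a \<le> \<sigma> a'")
    case True
    have "(\<sigma> a, \<tau> b') \<in> I" using W[OF i2 s1(1) True t1(2) order_refl] .
    then show ?thesis using bk r by blast
  next
    case False
    then have "\<sigma> a' \<le> \<sigma> a" by simp
    then have "(\<sigma> a', \<tau> b) \<in> I" using W[OF i1 s1(2) _ t1(1) order_refl] by blast
    then show ?thesis using bk r by blast
  qed
qed

lemma key:
  assumes F1: "\<And>a b a' b'. (a,b)\<in>U1 \<Longrightarrow> (a',b')\<in>U1 \<Longrightarrow> (a,b')\<in>U1 \<or> (a',b)\<in>U1"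
    and F2: "\<And>a b a' b'. (a,b)\<in>U2 \<Longrightarrow> (a',b')\<in>U2 \<Longrightarrow> (a,b')\<in>U2 \<or> (a',b)\<in>U2"
    and F3: "\<And>a b a' b'. (a,b)\<in>U3 \<Longrightarrow> (a',b')\<in>U3 \<Longrightarrow> (a,b')\<in>U3 \<or> (a',b)\<in>U3"
    and L: "is_line_of U1 U2 U3 H0 H2" "is_line_of U1 U2 U3 H1 H3"
    and N: "\<not> is_line_of U1 U2 U3 H0 H1" "\<not> is_line_of U1 U2 U3 H1 H2"
      "\<not> is_line_of U1 U2 U3 H2 H3" "\<not> is_line_of U1 U2 U3 H3 H0"
  shows "(\<exists>a1 a2 b1 c1. (a1,b1)\<in>U3 \<and> (a2,c1)\<in>U2 \<and> (a1,c1)\<notin>U2 \<and> (b1,c1)\<notin>U1 \<and> (a2,b1)\<notin>U3)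
    \<or> (\<exists>a1 b1 c1 c2. (a1,c1)\<in>U2 \<and> (b1,c2)\<in>U1 \<and> (a1,b1)\<notin>U3 \<and> (b1,c1)\<notin>U1 \<and> (a1,c2)\<notin>U2)
    \<or> (\<exists>a1 b1 b2 c1. (b1,c1)\<in>U1 \<and> (a1,b2)\<in>U3 \<and> (a1,b1)\<notin>U3 \<and> (a1,c1)\<notin>U2 \<and> (b2,c1)\<notin>U1)"
  using L N
  apply (cases H0; cases H1; cases H2; cases H3)
  apply simp_all
  apply (blast | metis F1 F2 F3)+
  done


lemma line_sym: "is_line_of U1 U2 U3 x y = is_line_of U1 U2 U3 y x"
  by (simp add: is_line_of_def insert_commute)

lemma four_cases: "(i::nat) < 4 \<Longrightarrow> i = 0 \<or> i = 1 \<or> i = 2 \<or> i = 3" by arith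

lemma hyp4_use:
  assumes h: "hyp4_star U1 U2 U3" and l: "is_line_of U1 U2 U3 H0 H2" "is_line_of U1 U2 U3 H1 H3"
  shows "is_line_of U1 U2 U3 H0 H1 \<or> is_line_of U1 U2 U3 H1 H2 \<or> is_line_of U1 U2 U3 H2 H3 \<or> is_line_of U1 U2 U3 H3 H0"
proof -
  define H where "H = (\<lambda>n::nat. if n=0 then H0 else if n=1 then H1 else if n=2 then H2 else H3)"
  have "\<forall>i<4. \<forall>j<4. j \<noteq> (i + 3) mod 4 \<and> j \<noteq> i \<and> j \<noteq> (i + 1) mod 4 \<longrightarrow>
            is_line_of U1 U2 U3 (H i) (H j)"
  proof (intro allI impI)
    fix i j :: nat assume a: "i < 4" "j < 4" "j \<noteq> (i + 3) mod 4 \<and> j \<noteq> i \<and> j \<noteq> (i + 1) mod 4"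
    show "is_line_of U1 U2 U3 (H i) (H j)"
      using four_cases[OF a(1)] four_cases[OF a(2)] a(3) l line_sym[of U1 U2 U3 H0 H2] line_sym[of U1 U2 U3 H1 H3]
      by (auto simp: H_def)
  qed
  then obtain u where u: "u < 4" "is_line_of U1 U2 U3 (H u) (H ((u + 1) mod 4))"
    using h unfolding hyp4_star_def by blast
  show ?thesis using four_cases[OF u(1)] u(2) by (auto simp: H_def)
qed

lemma cond_iff:
  assumes "a1 \<noteq> 0" "a2 \<noteq> 0" "b1 \<noteq> 0" "b2 \<noteq> 0" "c1 \<noteq> 0" "c2 \<noteq> 0"
  shows "(((mu U1 U2 U3 a1 b1 c1, mu U1 U2 U3 a2 b1 c1) \<noteq> (1,1) \<or>
        (mu U1 U2 U3 a1 b1 0, mu U1 U2 U3 a2 b1 0) \<noteq> (1,0)) \<and>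
       ((mu U1 U2 U3 a1 b1 c1, mu U1 U2 U3 a1 b1 c2) \<noteq> (1,1) \<or>
        (mu U1 U2 U3 a1 0 c1, mu U1 U2 U3 a1 0 c2) \<noteq> (1,0)) \<and>
       ((mu U1 U2 U3 a1 b1 c1, mu U1 U2 U3 a1 b2 c1) \<noteq> (1,1) \<or>
        (mu U1 U2 U3 0 b1 c1, mu U1 U2 U3 0 b2 c1) \<noteq> (1,0)))
   \<longleftrightarrow> \<not> ((a1,b1)\<in>U3 \<and> (a2,c1)\<in>U2 \<and> (a1,c1)\<notin>U2 \<and> (b1,c1)\<notin>U1 \<and> (a2,b1)\<notin>U3)
     \<and> \<not> ((a1,c1)\<in>U2 \<and> (b1,c2)\<in>U1 \<and> (a1,b1)\<notin>U3 \<and> (b1,c1)\<notin>U1 \<and> (a1,c2)\<notin>U2)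
     \<and> \<not> ((b1,c1)\<in>U1 \<and> (a1,b2)\<in>U3 \<and> (a1,b1)\<notin>U3 \<and> (a1,c1)\<notin>U2 \<and> (b2,c1)\<notin>U1)"
  using assms by (auto simp: mu_char) (auto simp: mu_def split: if_splits)

theorem proposition3p8:
  fixes d1 d2 d3 :: nat and U1 U2 U3 :: "(nat \<times> nat) set"
  assumes "variety_of_lines d1 d2 d3 U1 U2 U3"
    and "resembles_ferrers U1 d2 d3"
    and "resembles_ferrers U2 d1 d3"
    and "resembles_ferrers U3 d1 d2"
  shows "hyp4_star U1 U2 U3 \<longleftrightarrow>
    (\<forall>a1\<in>{1..d1}. \<forall>a2\<in>{1..d1}. \<forall>b1\<in>{1..d2}. \<forall>b2\<in>{1..d2}. \<forall>c1\<in>{1..d3}. \<forall>c2\<in>{1..d3}.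
       ((mu U1 U2 U3 a1 b1 c1, mu U1 U2 U3 a2 b1 c1) \<noteq> (1,1) \<or>
        (mu U1 U2 U3 a1 b1 0, mu U1 U2 U3 a2 b1 0) \<noteq> (1,0)) \<and>
       ((mu U1 U2 U3 a1 b1 c1, mu U1 U2 U3 a1 b1 c2) \<noteq> (1,1) \<or>
        (mu U1 U2 U3 a1 0 c1, mu U1 U2 U3 a1 0 c2) \<noteq> (1,0)) \<and>
       ((mu U1 U2 U3 a1 b1 c1, mu U1 U2 U3 a1 b2 c1) \<noteq> (1,1) \<or>
        (mu U1 U2 U3 0 b1 c1, mu U1 U2 U3 0 b2 c1) \<noteq> (1,0)))"
proof -
  have S: "U3 \<subseteq> {1..d1} \<times> {1..d2}" "U2 \<subseteq> {1..d1} \<times> {1..d3}" "U1 \<subseteq> {1..d2} \<times> {1..d3}"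
    using assms(1) unfolding variety_of_lines_def by blast+
  have F1: "\<And>a b a' b'. (a,b)\<in>U1 \<Longrightarrow> (a',b')\<in>U1 \<Longrightarrow> (a,b')\<in>U1 \<or> (a',b)\<in>U1"
    using ferrers_nested[OF assms(2) S(3)] by blast
  have F2: "\<And>a b a' b'. (a,b)\<in>U2 \<Longrightarrow> (a',b')\<in>U2 \<Longrightarrow> (a,b')\<in>U2 \<or> (a',b)\<in>U2"
    using ferrers_nested[OF assms(3) S(2)] by blast
  have F3: "\<And>a b a' b'. (a,b)\<in>U3 \<Longrightarrow> (a',b')\<in>U3 \<Longrightarrow> (a,b')\<in>U3 \<or> (a',b)\<in>U3"
    using ferrers_nested[OF assms(4) S(1)] by blast
  show ?thesis
  proof
    assume h: "hyp4_star U1 U2 U3"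
    show "\<forall>a1\<in>{1..d1}. \<forall>a2\<in>{1..d1}. \<forall>b1\<in>{1..d2}. \<forall>b2\<in>{1..d2}. \<forall>c1\<in>{1..d3}. \<forall>c2\<in>{1..d3}. (((mu U1 U2 U3 a1 b1 c1, mu U1 U2 U3 a2 b1 c1) \<noteq> (1,1) \<or>
        (mu U1 U2 U3 a1 b1 0, mu U1 U2 U3 a2 b1 0) \<noteq> (1,0)) \<and>
       ((mu U1 U2 U3 a1 b1 c1, mu U1 U2 U3 a1 b1 c2) \<noteq> (1,1) \<or>
        (mu U1 U2 U3 a1 0 c1, mu U1 U2 U3 a1 0 c2) \<noteq> (1,0)) \<and>
       ((mu U1 U2 U3 a1 b1 c1, mu U1 U2 U3 a1 b2 c1) \<noteq> (1,1) \<or>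
        (mu U1 U2 U3 0 b1 c1, mu U1 U2 U3 0 b2 c1) \<noteq> (1,0)))"
    proof (intro ballI)
      fix a1 a2 b1 b2 c1 c2
      assume r: "a1\<in>{1..d1}" "a2\<in>{1..d1}" "b1\<in>{1..d2}" "b2\<in>{1..d2}" "c1\<in>{1..d3}" "c2\<in>{1..d3}"
      have p1: "\<not> ((a1,b1)\<in>U3 \<and> (a2,c1)\<in>U2 \<and> (a1,c1)\<notin>U2 \<and> (b1,c1)\<notin>U1 \<and> (a2,b1)\<notin>U3)"
        using hyp4_use[OF h, of "HypA a1" "HypB b1" "HypA a2" "HypC c1"] by auto
      have p2: "\<not> ((a1,c1)\<in>U2 \<and> (b1,c2)\<in>U1 \<and> (a1,b1)\<notin>U3 \<and> (b1,c1)\<notin>U1 \<and> (a1,c2)\<notin>U2)"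
        using hyp4_use[OF h, of "HypC c1" "HypA a1" "HypC c2" "HypB b1"] by auto
      have p3: "\<not> ((b1,c1)\<in>U1 \<and> (a1,b2)\<in>U3 \<and> (a1,b1)\<notin>U3 \<and> (a1,c1)\<notin>U2 \<and> (b2,c1)\<notin>U1)"
        using hyp4_use[OF h, of "HypB b1" "HypC c1" "HypB b2" "HypA a1"] by auto
      have nz: "a1 \<noteq> 0" "a2 \<noteq> 0" "b1 \<noteq> 0" "b2 \<noteq> 0" "c1 \<noteq> 0" "c2 \<noteq> 0" using r by auto
      show "(((mu U1 U2 U3 a1 b1 c1, mu U1 U2 U3 a2 b1 c1) \<noteq> (1,1) \<or>
        (mu U1 U2 U3 a1 b1 0, mu U1 U2 U3 a2 b1 0) \<noteq> (1,0)) \<and>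
       ((mu U1 U2 U3 a1 b1 c1, mu U1 U2 U3 a1 b1 c2) \<noteq> (1,1) \<or>
        (mu U1 U2 U3 a1 0 c1, mu U1 U2 U3 a1 0 c2) \<noteq> (1,0)) \<and>
       ((mu U1 U2 U3 a1 b1 c1, mu U1 U2 U3 a1 b2 c1) \<noteq> (1,1) \<or>
        (mu U1 U2 U3 0 b1 c1, mu U1 U2 U3 0 b2 c1) \<noteq> (1,0)))" using cond_iff[OF nz, of U1 U2 U3] p1 p2 p3 by blast
    qed
  next
    assume P: "\<forall>a1\<in>{1..d1}. \<forall>a2\<in>{1..d1}. \<forall>b1\<in>{1..d2}. \<forall>b2\<in>{1..d2}. \<forall>c1\<in>{1..d3}. \<forall>c2\<in>{1..d3}. (((mu U1 U2 U3 a1 b1 c1, mu U1 U2 U3 a2 b1 c1) \<noteq> (1,1) \<or>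
        (mu U1 U2 U3 a1 b1 0, mu U1 U2 U3 a2 b1 0) \<noteq> (1,0)) \<and>
       ((mu U1 U2 U3 a1 b1 c1, mu U1 U2 U3 a1 b1 c2) \<noteq> (1,1) \<or>
        (mu U1 U2 U3 a1 0 c1, mu U1 U2 U3 a1 0 c2) \<noteq> (1,0)) \<and>
       ((mu U1 U2 U3 a1 b1 c1, mu U1 U2 U3 a1 b2 c1) \<noteq> (1,1) \<or>
        (mu U1 U2 U3 0 b1 c1, mu U1 U2 U3 0 b2 c1) \<noteq> (1,0)))"
    have Q: "\<not> ((a1,b1)\<in>U3 \<and> (a2,c1)\<in>U2 \<and> (a1,c1)\<notin>U2 \<and> (b1,c1)\<notin>U1 \<and> (a2,b1)\<notin>U3)
     \<and> \<not> ((a1,c1)\<in>U2 \<and> (b1,c2)\<in>U1 \<and> (a1,b1)\<notin>U3 \<and> (b1,c1)\<notin>U1 \<and> (a1,c2)\<notin>U2)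
     \<and> \<not> ((b1,c1)\<in>U1 \<and> (a1,b2)\<in>U3 \<and> (a1,b1)\<notin>U3 \<and> (a1,c1)\<notin>U2 \<and> (b2,c1)\<notin>U1)"
      if r: "a1\<in>{1..d1}" "a2\<in>{1..d1}" "b1\<in>{1..d2}" "b2\<in>{1..d2}" "c1\<in>{1..d3}" "c2\<in>{1..d3}"
      for a1 a2 b1 b2 c1 c2
    proof -
      have nz: "a1 \<noteq> 0" "a2 \<noteq> 0" "b1 \<noteq> 0" "b2 \<noteq> 0" "c1 \<noteq> 0" "c2 \<noteq> 0" using r by auto
      show ?thesis using cond_iff[OF nz, of U1 U2 U3] P r by blast
    qed
    show "hyp4_star U1 U2 U3"
      unfolding hyp4_star_def
    proof (intro allI impI)
      fix H :: "nat \<Rightarrow> hyp"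
      assume d: "\<forall>i<4. \<forall>j<4. j \<noteq> (i + 3) mod 4 \<and> j \<noteq> i \<and> j \<noteq> (i + 1) mod 4 \<longrightarrow>
            is_line_of U1 U2 U3 (H i) (H j)"
      have l02: "is_line_of U1 U2 U3 (H 0) (H 2)" using d by auto
      have l13: "is_line_of U1 U2 U3 (H 1) (H 3)" using d by auto
      show "\<exists>u<4. is_line_of U1 U2 U3 (H u) (H ((u + 1) mod 4))"
      proof (rule ccontr)
        assume "\<not> ?thesis"
        then have A: "\<And>u. u < 4 \<Longrightarrow> \<not> is_line_of U1 U2 U3 (H u) (H ((u + 1) mod 4))" by blast
        have e: "(0+1) mod 4 = (1::nat)" "(1+1) mod 4 = (2::nat)" "(2+1) mod 4 = (3::nat)" "(3+1) mod 4 = (0::nat)" by simp_all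
        have n: "\<not> is_line_of U1 U2 U3 (H 0) (H 1)" "\<not> is_line_of U1 U2 U3 (H 1) (H 2)"
          "\<not> is_line_of U1 U2 U3 (H 2) (H 3)" "\<not> is_line_of U1 U2 U3 (H 3) (H 0)"
          using A[of 0, unfolded e(1)] A[of 1, unfolded e(2)] A[of 2, unfolded e(3)] A[of 3, unfolded e(4)] by simp_all
        have K: "(\<exists>a1 a2 b1 c1. (a1,b1)\<in>U3 \<and> (a2,c1)\<in>U2 \<and> (a1,c1)\<notin>U2 \<and> (b1,c1)\<notin>U1 \<and> (a2,b1)\<notin>U3)
    \<or> (\<exists>a1 b1 c1 c2. (a1,c1)\<in>U2 \<and> (b1,c2)\<in>U1 \<and> (a1,b1)\<notin>U3 \<and> (b1,c1)\<notin>U1 \<and> (a1,c2)\<notin>U2)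
    \<or> (\<exists>a1 b1 b2 c1. (b1,c1)\<in>U1 \<and> (a1,b2)\<in>U3 \<and> (a1,b1)\<notin>U3 \<and> (a1,c1)\<notin>U2 \<and> (b2,c1)\<notin>U1)"
          apply (rule key[OF _ _ _ l02 l13 n])
          using F1 apply blast
          using F2 apply blast
          using F3 apply blast
          done
        from K show False
        proof (elim disjE exE conjE)
          fix a1 a2 b1 c1 assume h: "(a1,b1)\<in>U3" "(a2,c1)\<in>U2" "(a1,c1)\<notin>U2" "(b1,c1)\<notin>U1" "(a2,b1)\<notin>U3"
          have "a1\<in>{1..d1}" "a2\<in>{1..d1}" "b1\<in>{1..d2}" "c1\<in>{1..d3}" using h S by auto
          then show False using Q[of a1 a2 b1 b1 c1 c1] h by blast
        next
          fix a1 b1 c1 c2 assume h: "(a1,c1)\<in>U2" "(b1,c2)\<in>U1" "(a1,b1)\<notin>U3" "(b1,c1)\<notin>U1" "(a1,c2)\<notin>U2"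
          have "a1\<in>{1..d1}" "b1\<in>{1..d2}" "c1\<in>{1..d3}" "c2\<in>{1..d3}" using h S by auto
          then show False using Q[of a1 a1 b1 b1 c1 c2] h by blast
        next
          fix a1 b1 b2 c1 assume h: "(b1,c1)\<in>U1" "(a1,b2)\<in>U3" "(a1,b1)\<notin>U3" "(a1,c1)\<notin>U2" "(b2,c1)\<notin>U1"
          have "a1\<in>{1..d1}" "b1\<in>{1..d2}" "b2\<in>{1..d2}" "c1\<in>{1..d3}" using h S by auto
          then show False using Q[of a1 a1 b1 b2 c1 c1] h by blast
        qed
      qed
    qed
  qed
qed

end
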